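(* Let $n,N\geq 1$ be integers, $0<\alpha<1$, and let $f=(f_1,\dots,f_N)^T:D^n\to B^N$ be holomorphic, where $D^n=\{z\in\mathbb{C}^n:\|z\|_\infty<1\}$ and $B^N=\{w\in\mathbb{C}^N:\|w\|<1\}$. Let $z_0=(z_{0,1},\dots,z_{0,n})^T\in\partial D^n$ and $1\le r\le n$ be such that $|z_{0,j}|=1$ for $1\le j\le r$ and $|z_{0,j}|<1$ for $r<j\le n$. Suppose $f$ is $C^{1+\alpha}$ at $z_0$ and $f(z_0)=w_0\in\partial B^N$. Put $a=f(0)$. Then there exist nonnegative real numbers $\gamma_1,\dots,\gamma_r$ with $\sum_{j=1}^r\gamma_j\geq 1$ such that $$\overline{J_f(z_0)}^T w_0=\lambda\,\mathrm{diag}(\gamma_1,\dots,\gamma_r,0,\dots,0)\,z_0,$$ where $\lambda=\dfrac{|1-\bar a^T w_0|^2}{1-\|a\|^2}>0$.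
   Context: Vectors are column vectors; $\|w\|$ is the Euclidean norm, $\|z\|_\infty=\max_j|z_j|$, $\bar a^T w_0=\sum_j \overline{a_j}\,w_{0,j}$. "$f$ is $C^{1+\alpha}$ at $z_0$" means: there is a neighborhood $V$ of $z_0$ such that $f$ extends to $\overline{D^n}\cap V$ as a $C^1$ map whose first-order partial derivatives are Hölder continuous with exponent $\alpha$ there. $J_f(z_0)=\left(\frac{\partial f_i}{\partial z_j}(z_0)\right)_{N\times n}$ is the complex Jacobian matrix of (this extension of) $f$ at $z_0$, and $\overline{J_f(z_0)}^T$ its conjugate transpose. $\mathrm{diag}(\gamma_1,\dots,\gamma_r,0,\dots,0)$ is the $n\times n$ diagonal matrix with those diagonal entries. *)

theory Defs
  imports "HOL-Analysis.Analysis"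
begin

definition polydisc :: "(complex ^ 'n::finite) set" where
  "polydisc = {z. \<forall>j. cmod (z $ j) < 1}"

definition holo_vec_on ::
  "(complex ^ 'n::finite \<Rightarrow> complex ^ 'm::finite) \<Rightarrow> (complex ^ 'n) set \<Rightarrow> bool" where
  "holo_vec_on f S \<longleftrightarrow> (\<forall>z\<in>S. \<exists>L. (f has_derivative L) (at z) \<and>
       (\<forall>c h. L (c *s h) = c *s L h))"

text \<open>g is a C^1 extension of f to closure(D^n) \<inter> V, with derivative g',
  whose first-order (real) partial derivatives are Hoelder continuous with exponent alpha.\<close>
definition C1alpha_extension ::
  "(complex ^ 'n::finite \<Rightarrow> complex ^ 'm::finite) \<Rightarrow> real \<Rightarrow> (complex ^ 'n) set
   \<Rightarrow> (complex ^ 'n \<Rightarrow> complex ^ 'm)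
   \<Rightarrow> (complex ^ 'n \<Rightarrow> complex ^ 'n \<Rightarrow> complex ^ 'm) \<Rightarrow> bool" where
  "C1alpha_extension f \<alpha> V g g' \<longleftrightarrow>
     open V \<and>
     (\<forall>z \<in> polydisc \<inter> V. g z = f z) \<and>
     (\<forall>x \<in> closure polydisc \<inter> V. (g has_derivative g' x) (at x within (closure polydisc \<inter> V))) \<and>
     (\<forall>e \<in> Basis. continuous_on (closure polydisc \<inter> V) (\<lambda>x. g' x e)) \<and>
     (\<exists>C. \<forall>e \<in> Basis. \<forall>x \<in> closure polydisc \<inter> V. \<forall>y \<in> closure polydisc \<inter> V.
          norm (g' x e - g' y e) \<le> C * dist x y powr \<alpha>)"

text \<open>Complex Jacobian entry (d g_i / d z_j)(z0) via the Wirtinger operator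
  (1/2)(d/dx_j - i d/dy_j) applied to the real derivative g' z0.\<close>
definition cjac ::
  "(complex ^ 'n::finite \<Rightarrow> complex ^ 'n \<Rightarrow> complex ^ 'm::finite) \<Rightarrow> complex ^ 'n
   \<Rightarrow> 'm \<Rightarrow> 'n \<Rightarrow> complex" where
  "cjac g' z0 i j = (g' z0 (axis j 1) $ i - \<i> * g' z0 (axis j \<i>) $ i) / 2"

end

theory Submission
  imports Defs "HOL-Complex_Analysis.Conformal_Mappings"
begin


definition cip :: "complex ^ 'm::finite \<Rightarrow> complex ^ 'm \<Rightarrow> complex" where
  "cip x y = (\<Sum>i\<in>UNIV. x $ i * cnj (y $ i))"

lemma cip_add_left: "cip (x + y) z = cip x z + cip y z"
  by (simp add: cip_def sum.distrib distrib_right)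
lemma cip_diff_left: "cip (x - y) z = cip x z - cip y z"
  by (simp add: cip_def sum_subtractf left_diff_distrib)
lemma cip_add_right: "cip z (x + y) = cip z x + cip z y"
  by (simp add: cip_def sum.distrib distrib_left)
lemma cip_diff_right: "cip z (x - y) = cip z x - cip z y"
  by (simp add: cip_def sum_subtractf right_diff_distrib)
lemma cip_scale_left: "cip (c *s x) y = c * cip x y"
  by (simp add: cip_def sum_distrib_left mult.assoc)
lemma cip_scale_right: "cip x (c *s y) = cnj c * cip x y"
  by (simp add: cip_def sum_distrib_left algebra_simps)
lemma cip_cnj: "cnj (cip x y) = cip y x"
  by (simp add: cip_def mult.commute)
lemma cip_zero_left[simp]: "cip 0 y = 0" by (simp add: cip_def)
lemma cip_zero_right[simp]: "cip y 0 = 0" by (simp add: cip_def)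

lemma inner_cip: "inner x y = Re (cip x y)"
  by (simp add: cip_def inner_vec_def inner_complex_def Re_sum)

lemma cip_self: "cip x x = complex_of_real ((norm x)\<^sup>2)"
proof -
  have "cip x x = (\<Sum>i\<in>UNIV. complex_of_real ((cmod (x$i))\<^sup>2))"
    unfolding cip_def by (rule sum.cong) (simp, metis complex_norm_square)
  also have "\<dots> = complex_of_real (\<Sum>i\<in>UNIV. (norm (x$i))\<^sup>2)" by (simp only: of_real_sum)
  also have "\<dots> = complex_of_real ((norm x)\<^sup>2)"
    by (simp add: norm_vec_def L2_set_def sum_nonneg)
  finally show ?thesis .
qed

lemma cip_cauchy: "cmod (cip x y) \<le> norm x * norm y"
proof (cases "cip x y = 0")
  case True thus ?thesis by simp
next
  case False
  define \<omega> where "\<omega> = cnj (cip x y) / cmod (cip x y)"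
  have nw: "cmod \<omega> = 1" using False by (simp add: \<omega>_def norm_divide)
  have "cmod (cip x y) = Re (\<omega> * cip x y)"
    using False by (simp add: \<omega>_def complex_norm_square[symmetric] power2_eq_square mult.commute)
  also have "\<dots> = inner (\<omega> *s x) y" by (simp add: inner_cip cip_scale_left)
  also have "\<dots> \<le> norm (\<omega> *s x) * norm y" by (rule norm_cauchy_schwarz)
  also have "norm (\<omega> *s x) = norm x"
  proof -
    have "(norm (\<omega> *s x))\<^sup>2 = (norm x)\<^sup>2"
    proof -
      have "complex_of_real ((norm (\<omega> *s x))\<^sup>2) = complex_of_real ((norm x)\<^sup>2)"
        unfolding cip_self[symmetric] cip_scale_left cip_scale_right
        using nw by (simp add: complex_norm_square[symmetric] mult.assoc[symmetric])
           (metis complex_norm_square mult.commute mult_1 of_real_1 one_power2 cip_self)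
      thus ?thesis by (metis of_real_eq_iff)
    qed
    thus ?thesis by (simp add: power2_eq_iff_nonneg)
  qed
  finally show ?thesis .
qed

definition Nb :: "complex ^ 'm::finite \<Rightarrow> complex ^ 'm \<Rightarrow> complex ^ 'm" where
  "Nb b v = (1 - (1 - complex_of_real (sqrt (1 - (norm b)\<^sup>2))) * cip v b / complex_of_real ((norm b)\<^sup>2)) *s b
            - complex_of_real (sqrt (1 - (norm b)\<^sup>2)) *s v"

lemma Nb_b: "Nb b b = 0"
proof (cases "b = 0")
  case True thus ?thesis by (simp add: Nb_def)
next
  case False
  hence "complex_of_real ((norm b)\<^sup>2) \<noteq> 0" by simp
  thus ?thesis by (simp add: Nb_def cip_self field_simps vector_sub_rdistrib)
qed

lemma Nb_identity:
  assumes "norm b < 1"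
  shows "(norm (Nb b v))\<^sup>2 = (cmod (1 - cip v b))\<^sup>2 - (1 - (norm b)\<^sup>2) * (1 - (norm v)\<^sup>2)"
proof -
  define B where "B = (norm b)\<^sup>2"
  define s where "s = sqrt (1 - B)"
  define V where "V = (norm v)\<^sup>2"
  define c where "c = cip v b"
  have B0: "0 \<le> B" "B < 1" using assms by (auto simp: B_def power_less_one_iff abs_square_less_1)
  have ss: "s\<^sup>2 = 1 - B" using B0 by (simp add: s_def)
  define \<alpha> where "\<alpha> = 1 - (1 - complex_of_real s) * c / complex_of_real B"
  have N: "Nb b v = \<alpha> *s b - complex_of_real s *s v"
    by (simp add: Nb_def \<alpha>_def s_def B_def c_def)
  have cbv: "cip b v = cnj c" by (simp add: c_def cip_cnj)
  have "complex_of_real ((norm (Nb b v))\<^sup>2) = cip (Nb b v) (Nb b v)" by (simp add: cip_self)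
  also have "\<dots> = \<alpha> * cnj \<alpha> * B - \<alpha> * s * cnj c - s * cnj \<alpha> * c + s * s * V"
    unfolding N
    apply (simp only: cip_diff_left cip_diff_right cip_scale_left cip_scale_right)
    apply (simp only: cip_self cbv
       c_def[symmetric] B_def[symmetric] V_def[symmetric] complex_cnj_complex_of_real)
    apply (simp only: algebra_simps of_real_mult)
    done
  finally have E: "complex_of_real ((norm (Nb b v))\<^sup>2) = \<alpha> * cnj \<alpha> * B - \<alpha> * s * cnj c - s * cnj \<alpha> * c + s * s * V" .
  show ?thesis
  proof (cases "B = 0")
    case True
    hence "b = 0" by (simp add: B_def)
    hence "c = 0" by (simp add: c_def)
    have "s = 1" using True by (simp add: s_def)
    have "complex_of_real ((norm (Nb b v))\<^sup>2) = complex_of_real V"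
      using E True \<open>c = 0\<close> \<open>s = 1\<close> by (simp add: \<alpha>_def)
    hence "(norm (Nb b v))\<^sup>2 = V" by (simp only: of_real_eq_iff)
    thus ?thesis using \<open>b = 0\<close> by (simp add: V_def)
  next
    case False
    define x where "x = Re c"
    define y where "y = Im c"
    have al: "\<alpha> = 1 - complex_of_real ((1-s)/B) * c"
      using False by (simp add: \<alpha>_def field_simps)
    have Ra: "Re \<alpha> = 1 - (1 - s) * x / B" and Ia: "Im \<alpha> = - ((1 - s) * y / B)"
      unfolding al x_def y_def by simp_all
    have "Re (\<alpha> * cnj \<alpha> * B - \<alpha> * s * cnj c - s * cnj \<alpha> * c + s * s * V)
        = B * ((Re \<alpha>)\<^sup>2 + (Im \<alpha>)\<^sup>2) - 2 * s * (Re \<alpha> * x + Im \<alpha> * y) + s * s * V"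
      by (simp add: x_def y_def power2_eq_square algebra_simps)
    also have "\<dots> = B - 2 * x + (x\<^sup>2 + y\<^sup>2) * ((1-s)\<^sup>2 + 2 * s * (1 - s)) / B + s * s * V"
      unfolding Ra Ia using False by (simp add: field_simps power2_eq_square)
    also have "(1-s)\<^sup>2 + 2 * s * (1 - s) = B" using ss by (simp add: power2_eq_square algebra_simps)
    also have "B - 2 * x + (x\<^sup>2 + y\<^sup>2) * B / B + s * s * V = (cmod (1 - c))\<^sup>2 - (1 - B) * (1 - V)"
    proof -
      have cm: "(cmod (1 - c))\<^sup>2 = (1 - x)\<^sup>2 + y\<^sup>2" by (simp add: cmod_power2 x_def y_def)
      have d: "(x\<^sup>2 + y\<^sup>2) * B / B = x\<^sup>2 + y\<^sup>2" using False by simp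
      have s2: "s * s = 1 - B" using ss by (simp add: power2_eq_square)
      show ?thesis unfolding d s2 cm by (simp add: power2_eq_square algebra_simps)
    qed
    finally have "Re (\<alpha> * cnj \<alpha> * B - \<alpha> * s * cnj c - s * cnj \<alpha> * c + s * s * V)
        = (cmod (1 - c))\<^sup>2 - (1 - B) * (1 - V)" .
    hence "(norm (Nb b v))\<^sup>2 = (cmod (1 - c))\<^sup>2 - (1 - B) * (1 - V)"
      using arg_cong[OF E, of Re] by (simp only: Re_complex_of_real)
    thus ?thesis by (simp only: B_def V_def c_def)
  qed
qed

lemma cip_holo:
  assumes "\<And>i. (\<lambda>\<zeta>. u \<zeta> $ i) holomorphic_on S"
  shows "(\<lambda>\<zeta>. cip (u \<zeta>) y) holomorphic_on S"
  unfolding cip_def by (intro holomorphic_on_sum holomorphic_intros assms)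

lemma cip_lt1:
  assumes "norm v < 1" "norm b < 1"
  shows "cmod (cip v b) < 1" "1 - cip v b \<noteq> 0"
proof -
  have "cmod (cip v b) \<le> norm v * norm b" by (rule cip_cauchy)
  also have "\<dots> < 1" using assms
    by (metis mult_le_one norm_ge_zero order_le_less_trans less_imp_le mult_strict_mono zero_less_one
        mult_1_left linorder_not_le)
  finally show "cmod (cip v b) < 1" .
  thus "1 - cip v b \<noteq> 0" by auto
qed

lemma Nb_lt:
  assumes "norm v < 1" "norm b < 1"
  shows "norm (Nb b v) < cmod (1 - cip v b)"
proof -
  have "(norm (Nb b v))\<^sup>2 < (cmod (1 - cip v b))\<^sup>2"
  proof -
    have "0 < (1 - (norm b)\<^sup>2) * (1 - (norm v)\<^sup>2)"
      using assms by (simp add: abs_square_less_1)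
    thus ?thesis using Nb_identity[OF assms(2), of v] by linarith
  qed
  thus ?thesis by (simp add: power_less_imp_less_base)
qed

lemma ball_pick:
  fixes u :: "complex \<Rightarrow> complex ^ 'm::finite"
  assumes hol: "\<And>i. (\<lambda>\<zeta>. u \<zeta> $ i) holomorphic_on ball 0 1"
    and inb: "\<And>\<zeta>. norm \<zeta> < 1 \<Longrightarrow> norm (u \<zeta>) < 1"
    and t: "0 \<le> t" "t < 1"
  shows "(1 - t\<^sup>2) * (cmod (1 - cip (u (of_real t)) (u 0)))\<^sup>2
           \<le> (1 - (norm (u 0))\<^sup>2) * (1 - (norm (u (of_real t)))\<^sup>2)"
proof -
  define b where "b = u 0"
  define w where "w = u (of_real t)"
  define e where "e = Nb b w"
  define c where "c = cip w b"
  have nb: "norm b < 1" using inb[of 0] by (simp add: b_def)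
  have nw: "norm w < 1" using inb[of "of_real t"] t by (simp add: w_def)
  have I: "(norm e)\<^sup>2 = (cmod (1 - c))\<^sup>2 - (1 - (norm b)\<^sup>2) * (1 - (norm w)\<^sup>2)"
    unfolding e_def c_def by (rule Nb_identity[OF nb])
  show ?thesis
  proof (cases "e = 0")
    case True
    hence "(cmod (1 - c))\<^sup>2 = (1 - (norm b)\<^sup>2) * (1 - (norm w)\<^sup>2)" using I by simp
    moreover have "(1 - t\<^sup>2) * (cmod (1 - c))\<^sup>2 \<le> (cmod (1 - c))\<^sup>2"
      using t by (intro mult_left_le_one_le) (auto simp: power_le_one)
    ultimately show ?thesis by (simp add: b_def w_def c_def)
  next
    case False
    define s where "s = complex_of_real (sqrt (1 - (norm b)\<^sup>2))"
    define B where "B = complex_of_real ((norm b)\<^sup>2)"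
    define G where "G = (\<lambda>\<zeta>. ((1 - (1 - s) * cip (u \<zeta>) b / B) * cip b e - s * cip (u \<zeta>) e)
                          / (1 - cip (u \<zeta>) b) / complex_of_real (norm e))"
    have Geq: "G \<zeta> = cip (Nb b (u \<zeta>)) e / (1 - cip (u \<zeta>) b) / complex_of_real (norm e)" for \<zeta>
      unfolding G_def Nb_def s_def B_def by (simp only: cip_diff_left cip_scale_left)
    have holG: "G holomorphic_on ball 0 1"
      unfolding G_def
      by (intro holomorphic_intros cip_holo hol) (use cip_lt1(2)[OF inb nb] False in auto)
    have G0: "G 0 = 0" unfolding Geq by (simp add: Nb_b b_def[symmetric])
    have Glt: "norm (G \<zeta>) < 1" if "norm \<zeta> < 1" for \<zeta>
    proof -
      have nu: "norm (u \<zeta>) < 1" using inb that .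
      have "cmod (cip (Nb b (u \<zeta>)) e) \<le> norm (Nb b (u \<zeta>)) * norm e" by (rule cip_cauchy)
      also have "\<dots> < cmod (1 - cip (u \<zeta>) b) * norm e"
        using Nb_lt[OF nu nb] False by simp
      finally have "cmod (cip (Nb b (u \<zeta>)) e) < cmod (1 - cip (u \<zeta>) b) * norm e" .
      thus ?thesis unfolding Geq using cip_lt1(2)[OF nu nb] False
        by (simp add: norm_divide divide_simps norm_mult)
    qed
    have "norm (G (of_real t)) \<le> norm (complex_of_real t)"
      by (rule Schwarz_Lemma(1)[OF holG G0 Glt]) (use t in auto)
    moreover have "norm (G (of_real t)) = norm e / cmod (1 - c)"
      unfolding Geq w_def[symmetric] e_def[symmetric] c_def[symmetric]
      using cip_lt1(2)[OF nw nb] False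
      by (simp add: cip_self norm_divide power2_eq_square c_def)
    ultimately have "norm e / cmod (1 - c) \<le> t" using t by simp
    hence "norm e \<le> t * cmod (1 - c)" using cip_lt1(2)[OF nw nb] by (simp add: divide_simps c_def)
    hence "(norm e)\<^sup>2 \<le> (t * cmod (1 - c))\<^sup>2" by (simp add: power_mono)
    hence "(cmod (1 - c))\<^sup>2 - (1 - (norm b)\<^sup>2) * (1 - (norm w)\<^sup>2) \<le> t\<^sup>2 * (cmod (1 - c))\<^sup>2"
      using I by (simp add: power_mult_distrib)
    thus ?thesis by (simp add: b_def w_def c_def algebra_simps)
  qed
qed



lemma polydisc_scale:
  fixes z :: "complex ^ 'n::finite"
  assumes "\<forall>j. cmod (z $ j) \<le> 1" "cmod c < 1"
  shows "c *s z \<in> polydisc"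
proof -
  have "cmod (c * z $ j) < 1" for j
  proof -
    have "cmod (c * z$j) = cmod c * cmod (z$j)" by (simp add: norm_mult)
    also have "\<dots> \<le> cmod c" using assms(1) by (simp add: mult_left_le)
    finally show ?thesis using assms(2) by linarith
  qed
  thus ?thesis by (simp add: polydisc_def)
qed

lemma closure_polydisc: "closure (polydisc :: (complex ^ 'n::finite) set) = {z. \<forall>j. cmod (z $ j) \<le> 1}"
proof
  have cl: "closed {z :: complex ^ 'n. \<forall>j. cmod (z $ j) \<le> 1}"
    by (intro closed_Collect_all closed_Collect_le continuous_intros)
  have sub: "polydisc \<subseteq> {z :: complex ^ 'n. \<forall>j. cmod (z $ j) \<le> 1}"
    by (auto simp: polydisc_def less_imp_le)
  show "closure (polydisc :: (complex ^ 'n) set) \<subseteq> {z. \<forall>j. cmod (z $ j) \<le> 1}"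
    using closure_minimal[OF sub cl] .
next
  show "{z. \<forall>j. cmod (z $ j) \<le> 1} \<subseteq> closure (polydisc :: (complex ^ 'n) set)"
  proof
    fix z :: "complex ^ 'n" assume z: "z \<in> {z. \<forall>j. cmod (z $ j) \<le> 1}"
    define x where "x = (\<lambda>n. complex_of_real (1 - inverse (real (Suc (Suc n)))) *s z)"
    have "x n \<in> polydisc" for n
    proof -
      have "0 < inverse (real (Suc (Suc n)))" "inverse (real (Suc (Suc n))) \<le> 1" by (auto simp: inverse_le_1_iff)
      hence "cmod (complex_of_real (1 - inverse (real (Suc (Suc n))))) < 1"
        by (simp only: norm_of_real)
      thus ?thesis unfolding x_def using z by (intro polydisc_scale) auto
    qed
    moreover have "x \<longlonglongrightarrow> z"
    proof -
      have "(\<lambda>n. inverse (real (Suc (Suc n)))) \<longlonglongrightarrow> 0"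
        using LIMSEQ_Suc[OF LIMSEQ_inverse_real_of_nat] .
      hence lim1: "(\<lambda>n. complex_of_real (1 - inverse (real (Suc (Suc n))))) \<longlonglongrightarrow> complex_of_real (1 - 0)"
        by (intro tendsto_intros)
      have "(\<lambda>n. complex_of_real (1 - inverse (real (Suc (Suc n)))) *s z) \<longlonglongrightarrow> complex_of_real (1 - 0) *s z"
      proof (intro vec_tendstoI)
        fix i
        show "((\<lambda>n. (complex_of_real (1 - inverse (real (Suc (Suc n)))) *s z) $ i) \<longlongrightarrow> (complex_of_real (1 - 0) *s z) $ i) sequentially"
          using tendsto_mult_right[OF lim1, of "z $ i"] by (simp add: algebra_simps)
      qed
      thus ?thesis by (simp add: x_def)
    qed
    ultimately show "z \<in> closure polydisc" unfolding closure_sequential by blast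
  qed
qed

lemma open_polydisc: "open (polydisc :: (complex ^ 'n::finite) set)"
proof -
  have eq: "polydisc = (\<Inter>j\<in>UNIV. {z :: complex ^ 'n. cmod (z $ j) < 1})"
    by (auto simp: polydisc_def)
  have "open {z :: complex ^ 'n. cmod (z $ j) < 1}" for j
    by (intro open_Collect_less continuous_intros)
  thus ?thesis unfolding eq by (intro open_INT) auto
qed

lemma bl_cmult: "bounded_linear (\<lambda>v::complex ^ 'n::finite. c *s v)"
proof -
  have "linear (\<lambda>v::complex ^ 'n. c *s v)"
    by (rule linearI) (auto simp: vec_eq_iff algebra_simps)
  thus ?thesis by (simp add: linear_conv_bounded_linear)
qed

lemma axis_i: "\<i> *s axis j (1::complex) = axis j \<i>"
  by (simp add: vec_eq_iff axis_def)

lemma axis_Basis: "axis j (1::complex) \<in> Basis" "axis j \<i> \<in> Basis"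
  by (auto simp: Basis_vec_def Basis_complex_def)

lemma bl_smult: "bounded_linear (\<lambda>h::complex. h *s (z :: complex ^ 'n::finite))"
proof -
  have "linear (\<lambda>h::complex. h *s z)"
    by (rule linearI) (auto simp: vec_eq_iff algebra_simps)
  thus ?thesis by (simp add: linear_conv_bounded_linear)
qed

lemma holo_u:
  fixes f :: "complex ^ 'n::finite \<Rightarrow> complex ^ 'm::finite"
  assumes hf: "holo_vec_on f polydisc" and z0: "\<forall>j. cmod (z0 $ j) \<le> 1"
  shows "(\<lambda>\<zeta>. f (\<zeta> *s z0) $ i) holomorphic_on ball 0 1"
  unfolding holomorphic_on_open[OF open_ball]
proof
  fix \<zeta> :: complex assume "\<zeta> \<in> ball 0 1"
  hence "\<zeta> *s z0 \<in> polydisc" using z0 by (intro polydisc_scale) auto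
  then obtain L where L: "(f has_derivative L) (at (\<zeta> *s z0))" and cl: "\<forall>c h. L (c *s h) = c *s L h"
    using hf unfolding holo_vec_on_def by blast
  have d1: "((\<lambda>h::complex. h *s z0) has_derivative (\<lambda>h. h *s z0)) (at \<zeta>)"
    by (rule bounded_linear_imp_has_derivative[OF bl_smult])
  have "((f \<circ> (\<lambda>h. h *s z0)) has_derivative (L \<circ> (\<lambda>h. h *s z0))) (at \<zeta>)"
    by (rule diff_chain_at[OF d1 L])
  hence "((\<lambda>x. (f \<circ> (\<lambda>h. h *s z0)) x $ i) has_derivative (\<lambda>x. (L \<circ> (\<lambda>h. h *s z0)) x $ i)) (at \<zeta>)"
    by (rule bounded_linear.has_derivative[OF bounded_linear_vec_nth])
  moreover have "(\<lambda>x. (L \<circ> (\<lambda>h. h *s z0)) x $ i) = (*) (L z0 $ i)"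
    using cl by (auto simp: mult.commute)
  ultimately have "((\<lambda>\<zeta>. f (\<zeta> *s z0) $ i) has_field_derivative (L z0 $ i)) (at \<zeta>)"
    by (simp add: has_field_derivative_def o_def)
  thus "\<exists>f'. ((\<lambda>\<zeta>. f (\<zeta> *s z0) $ i) has_field_derivative f') (at \<zeta>)" by blast
qed

locale setting =
  fixes f :: "complex ^ 'n::finite \<Rightarrow> complex ^ 'm::finite" and \<alpha> :: real
    and z0 :: "complex ^ 'n" and w0 :: "complex ^ 'm" and V :: "(complex ^ 'n) set"
    and g :: "complex ^ 'n \<Rightarrow> complex ^ 'm" and g' :: "complex ^ 'n \<Rightarrow> complex ^ 'n \<Rightarrow> complex ^ 'm"
  assumes holo: "holo_vec_on f polydisc" and fin: "f ` polydisc \<subseteq> ball 0 1"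
    and fr: "z0 \<in> frontier polydisc" and z0V: "z0 \<in> V"
    and C1: "C1alpha_extension f \<alpha> V g g'"
    and gz0: "g z0 = w0" and w0s: "w0 \<in> sphere 0 1"
begin

definition "S = closure polydisc \<inter> V"

lemma openV: "open V" using C1 by (simp add: C1alpha_extension_def)
lemma g_eq: "z \<in> polydisc \<inter> V \<Longrightarrow> g z = f z" using C1 by (simp add: C1alpha_extension_def)
lemma gder: "x \<in> S \<Longrightarrow> (g has_derivative g' x) (at x within S)"
  using C1 by (simp add: C1alpha_extension_def S_def)
lemma gcont: "e \<in> Basis \<Longrightarrow> continuous_on S (\<lambda>x. g' x e)"
  using C1 by (simp add: C1alpha_extension_def S_def)
lemma z0S: "z0 \<in> S" using fr z0V by (simp add: S_def frontier_def)
lemma z0le: "cmod (z0 $ j) \<le> 1"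
  using fr by (auto simp: frontier_def closure_polydisc)
lemma nw0: "norm w0 = 1" using w0s by simp
lemma sub_S: "polydisc \<inter> V \<subseteq> S" by (auto simp: S_def intro: closure_subset[THEN subsetD])
lemma S_le: "x \<in> S \<Longrightarrow> cmod (x $ j) \<le> 1" by (auto simp: S_def closure_polydisc)

lemma approx_seq:
  assumes "x \<in> S"
  obtains xs where "\<And>n. xs n \<in> polydisc \<inter> V" "xs \<longlonglongrightarrow> x"
proof -
  have "x \<in> V \<inter> closure polydisc" using assms by (auto simp: S_def)
  hence "x \<in> closure (V \<inter> polydisc)" using open_Int_closure_subset[OF openV] by blast
  thus ?thesis using that unfolding closure_sequential by (metis Int_commute)
qed

lemma seq_lim_S:
  assumes "x \<in> S" "continuous_on S h" "\<And>y. y \<in> polydisc \<inter> V \<Longrightarrow> P (h y)"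
    and cl: "closed {y. P y}"
  shows "P (h x)"
proof -
  obtain xs where xs: "\<And>n. xs n \<in> polydisc \<inter> V" "xs \<longlonglongrightarrow> x" using approx_seq[OF assms(1)] by blast
  have "continuous (at x within S) h" using assms(1,2) continuous_on_eq_continuous_within by blast
  hence "(h \<circ> xs) \<longlonglongrightarrow> h x"
    unfolding continuous_within_sequentially using xs sub_S by blast
  moreover have "\<forall>n. (h \<circ> xs) n \<in> {y. P y}" using xs assms(3) by auto
  ultimately have "h x \<in> {y. P y}" using closed_sequentially[OF cl] by blast
  thus ?thesis by simp
qed

lemma g_contS: "continuous_on S g"
  using gder has_derivative_continuous continuous_on_eq_continuous_within by blast

lemma g_bound: "x \<in> S \<Longrightarrow> inner (g x) w0 \<le> 1"
proof (rule seq_lim_S[where h = g and P = "\<lambda>y. inner y w0 \<le> 1"])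
  show "continuous_on S g" by (rule g_contS)
  show "closed {y. inner y w0 \<le> 1}" by (intro closed_Collect_le continuous_intros)
  fix y assume y: "y \<in> polydisc \<inter> V"
  have "norm (f y) < 1" using fin y by auto
  hence "inner (g y) w0 \<le> norm (g y) * norm w0" using norm_cauchy_schwarz by blast
  thus "inner (g y) w0 \<le> 1" using g_eq[OF y] \<open>norm (f y) < 1\<close> nw0 by simp
qed

lemma int_lin:
  assumes x: "x \<in> polydisc \<inter> V"
  shows "g' x (c *s h) = c *s g' x h"
proof -
  obtain L where L: "(f has_derivative L) (at x)" and cl: "\<forall>c h. L (c *s h) = c *s L h"
    using holo x unfolding holo_vec_on_def by blast
  have op: "open (polydisc \<inter> V)" using open_polydisc openV by blast
  have gL: "(g has_derivative L) (at x)"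
    by (rule has_derivative_transform_within_open[OF L op x]) (simp add: g_eq)
  have "x \<in> interior S" using interior_maximal[OF sub_S op] x by blast
  hence "at x within S = at x" by (rule at_within_interior)
  hence "(g has_derivative g' x) (at x)"
    using gder[of x] x sub_S by auto
  hence "g' x = L" using has_derivative_unique gL by blast
  thus ?thesis using cl by simp
qed

definition "D = g' z0"

lemma D_deriv: "(g has_derivative D) (at z0 within S)" using gder[OF z0S] by (simp add: D_def)
lemma D_bl: "bounded_linear D" using has_derivative_bounded_linear[OF D_deriv] .
lemma D_lin: "linear D" using D_bl bounded_linear.linear by blast

lemma D_i: "D (axis j \<i>) = \<i> *s D (axis j 1)"
proof -
  define h where "h x = g' x (axis j \<i>) - \<i> *s g' x (axis j 1)" for x
  have "continuous_on S h" unfolding h_def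
    by (intro continuous_on_diff gcont axis_Basis bounded_linear.continuous_on[OF bl_cmult])
  hence "h z0 = 0"
  proof (rule seq_lim_S[OF z0S, where P = "\<lambda>y. y = 0"])
    fix y assume "y \<in> polydisc \<inter> V"
    thus "h y = 0" using int_lin[of y \<i> "axis j 1"] by (simp add: h_def axis_i)
  qed simp
  thus ?thesis by (simp add: h_def D_def)
qed

lemma D_axis: "D (axis j c) = c *s D (axis j 1)"
proof -
  have ax: "axis j c = Re c *\<^sub>R axis j 1 + Im c *\<^sub>R axis j \<i>"
    by (simp add: vec_eq_iff axis_def complex_eq_iff)
  have "D (axis j c) = Re c *\<^sub>R D (axis j 1) + Im c *\<^sub>R (\<i> *s D (axis j 1))"
    unfolding ax using D_lin by (simp add: linear_add linear_scale D_i)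
  also have "\<dots> = c *s D (axis j 1)"
    by (simp add: vec_eq_iff) (simp add: complex_eq_iff algebra_simps)
  finally show ?thesis .
qed

lemma D_smult: "D (c *s axis j 1) = c *s D (axis j 1)"
proof -
  have e: "c *s axis j (1::complex) = axis j c" by (simp add: vec_eq_iff axis_def)
  show ?thesis unfolding e by (rule D_axis)
qed

lemma D_vec: "D z = (\<Sum>j\<in>UNIV. z $ j *s D (axis j 1))"
proof -
  have "D z = D (\<Sum>j\<in>UNIV. z $ j *s axis j 1)" by (simp add: basis_expansion)
  also have "\<dots> = (\<Sum>j\<in>UNIV. D (z $ j *s axis j 1))" using D_lin by (simp add: linear_sum)
  also have "\<dots> = (\<Sum>j\<in>UNIV. z $ j *s D (axis j 1))" by (simp add: D_smult)
  finally show ?thesis .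
qed

lemma cjac_eq: "cjac g' z0 i j = D (axis j 1) $ i"
  unfolding cjac_def D_def[symmetric] by (simp add: D_i)

lemma dir:
  assumes d: "d > 0" and inS: "\<And>\<tau>. \<tau> \<in> {0<..<d} \<Longrightarrow> z0 + \<tau> *\<^sub>R v \<in> S"
  shows "inner (D v) w0 \<le> 0"
proof -
  define T where "T = {0<..<d::real}"
  define \<gamma> where "\<gamma> \<tau> = z0 + \<tau> *\<^sub>R v" for \<tau>
  have g1: "(\<gamma> has_derivative (\<lambda>\<tau>. \<tau> *\<^sub>R v)) (at 0 within T)"
    unfolding \<gamma>_def by (auto intro!: derivative_eq_intros)
  have sub: "\<gamma> ` T \<subseteq> S" using inS by (auto simp: \<gamma>_def T_def)
  have g2: "(g has_derivative D) (at (\<gamma> 0) within \<gamma> ` T)"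
    using has_derivative_subset[OF D_deriv sub] by (simp add: \<gamma>_def)
  have "((g \<circ> \<gamma>) has_derivative (D \<circ> (\<lambda>\<tau>. \<tau> *\<^sub>R v))) (at 0 within T)"
    by (rule diff_chain_within[OF g1 g2])
  hence "((\<lambda>\<tau>. inner ((g \<circ> \<gamma>) \<tau>) w0) has_derivative (\<lambda>\<tau>. inner ((D \<circ> (\<lambda>\<tau>. \<tau> *\<^sub>R v)) \<tau>) w0)) (at 0 within T)"
    by (rule bounded_linear.has_derivative[OF bounded_linear_inner_left])
  moreover have "(\<lambda>\<tau>. inner ((D \<circ> (\<lambda>\<tau>. \<tau> *\<^sub>R v)) \<tau>) w0) = (*) (inner (D v) w0)"
    using D_lin by (auto simp: linear_scale mult.commute)
  ultimately have "((\<lambda>\<tau>. inner (g (\<gamma> \<tau>)) w0) has_field_derivative (inner (D v) w0)) (at 0 within T)"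
    by (simp add: has_field_derivative_def o_def)
  hence lim: "((\<lambda>y. (inner (g (\<gamma> y)) w0 - inner (g (\<gamma> 0)) w0) / (y - 0)) \<longlongrightarrow> inner (D v) w0) (at 0 within T)"
    by (simp only: has_field_derivative_iff)
  have ev: "eventually (\<lambda>y. 0 \<ge> (inner (g (\<gamma> y)) w0 - inner (g (\<gamma> 0)) w0) / (y - 0)) (at 0 within T)"
  proof -
    have "0 \<ge> (inner (g (\<gamma> y)) w0 - inner (g (\<gamma> 0)) w0) / (y - 0)" if "y \<in> T" for y
    proof -
      have "inner (g (\<gamma> y)) w0 \<le> 1" using g_bound sub that by blast
      moreover have "inner (g (\<gamma> 0)) w0 = 1" using nw0 by (simp add: \<gamma>_def gz0 power2_norm_eq_inner[symmetric])
      moreover have "y > 0" using that by (simp add: T_def)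
      ultimately show ?thesis by (simp add: divide_nonpos_pos)
    qed
    thus ?thesis unfolding eventually_at_filter by (auto intro: always_eventually)
  qed
  have nt: "\<not> trivial_limit (at (0::real) within T)"
    unfolding trivial_limit_within T_def using islimpt_greaterThanLessThan1[OF d] by simp
  show ?thesis by (rule tendsto_upperbound[OF lim ev nt])
qed

lemma ray_S:
  assumes d1: "d1 > 0" and cl: "\<And>\<tau>. \<tau> \<in> {0<..<d1} \<Longrightarrow> \<forall>k. cmod ((z0 + \<tau> *\<^sub>R v) $ k) \<le> 1"
  shows "\<exists>d>0. \<forall>\<tau>\<in>{0<..<d}. z0 + \<tau> *\<^sub>R v \<in> S"
proof -
  obtain e where e: "e > 0" "ball z0 e \<subseteq> V" using openV z0V open_contains_ball by blast
  define d where "d = min d1 (e / (norm v + 1))"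
  have pos: "norm v + 1 > 0" by (simp add: add_nonneg_pos)
  hence "d > 0" using d1 e by (simp add: d_def)
  moreover have "z0 + \<tau> *\<^sub>R v \<in> S" if "\<tau> \<in> {0<..<d}" for \<tau>
  proof -
    have "\<tau> * norm v \<le> \<tau> * (norm v + 1)" using that by auto
    also have "\<dots> < e"
    proof -
      have "\<tau> < e / (norm v + 1)" using that by (simp add: d_def)
      thus ?thesis using pos_less_divide_eq[OF pos] by blast
    qed
    finally have "dist z0 (z0 + \<tau> *\<^sub>R v) < e" using that by (simp add: dist_norm)
    hence "z0 + \<tau> *\<^sub>R v \<in> V" using e by auto
    moreover have "z0 + \<tau> *\<^sub>R v \<in> closure polydisc"
      using cl[of \<tau>] that by (simp add: d_def closure_polydisc)
    ultimately show ?thesis by (simp add: S_def)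
  qed
  ultimately show ?thesis by blast
qed

definition "\<psi> j = cip (D (axis j 1)) w0"

lemma dir_axis:
  assumes d1: "d1 > 0" and cl: "\<And>\<tau>. \<tau> \<in> {0<..<d1} \<Longrightarrow> \<forall>k. cmod ((z0 + \<tau> *\<^sub>R axis j c) $ k) \<le> 1"
  shows "Re (c * \<psi> j) \<le> 0"
proof -
  obtain d where "d > 0" "\<forall>\<tau>\<in>{0<..<d}. z0 + \<tau> *\<^sub>R axis j c \<in> S" using ray_S[OF d1 cl] by blast
  hence "inner (D (axis j c)) w0 \<le> 0" by (intro dir[of d]) auto
  thus ?thesis unfolding D_axis[of j c] by (simp add: inner_cip cip_scale_left \<psi>_def)
qed

lemma coord_upd: "(z0 + \<tau> *\<^sub>R axis j c) $ k = (if k = j then z0 $ j + \<tau> *\<^sub>R c else z0 $ k)"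
  by (cases "k = j") (simp_all add: axis_def)

lemma psi_zero:
  assumes "cmod (z0 $ j) < 1"
  shows "\<psi> j = 0"
proof -
  have R: "Re (c * \<psi> j) \<le> 0" if "cmod c = 1" for c
  proof (rule dir_axis[of "1 - cmod (z0 $ j)"])
    show "1 - cmod (z0 $ j) > 0" using assms by simp
    fix \<tau> :: real assume t: "\<tau> \<in> {0<..<1 - cmod (z0 $ j)}"
    show "\<forall>k. cmod ((z0 + \<tau> *\<^sub>R axis j c) $ k) \<le> 1"
    proof
      fix k
      show "cmod ((z0 + \<tau> *\<^sub>R axis j c) $ k) \<le> 1"
      proof (cases "k = j")
        case True
        have "cmod (z0 $ j + \<tau> *\<^sub>R c) \<le> cmod (z0 $ j) + cmod (\<tau> *\<^sub>R c)" by (rule norm_triangle_ineq)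
        also have "cmod (\<tau> *\<^sub>R c) = \<tau>" using t that by simp
        finally show ?thesis using t True by (simp add: coord_upd)
      qed (simp only: coord_upd, simp add: z0le)
    qed
  qed
  have "Re (\<psi> j) \<le> 0" using R[of 1] by simp
  moreover have "- Re (\<psi> j) \<le> 0" using R[of "-1"] by simp
  moreover have "- Im (\<psi> j) \<le> 0" using R[of \<i>] by simp
  moreover have "Im (\<psi> j) \<le> 0" using R[of "-\<i>"] by simp
  ultimately show ?thesis by (simp add: complex_eq_iff)
qed

lemma psi_bdry:
  assumes "cmod (z0 $ j) = 1"
  shows "Im (z0 $ j * \<psi> j) = 0" "Re (z0 $ j * \<psi> j) \<ge> 0"
proof -
  have R: "Re (z0 $ j * (-1 + \<i> * of_real s) * \<psi> j) \<le> 0" for s :: real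
  proof (rule dir_axis[of "1 / (1 + s\<^sup>2)"])
    show "1 / (1 + s\<^sup>2) > 0" by (simp add: add_pos_nonneg)
    fix \<tau> :: real assume t: "\<tau> \<in> {0<..<1 / (1 + s\<^sup>2)}"
    show "\<forall>k. cmod ((z0 + \<tau> *\<^sub>R axis j (z0 $ j * (-1 + \<i> * of_real s))) $ k) \<le> 1"
    proof
      fix k
      show "cmod ((z0 + \<tau> *\<^sub>R axis j (z0 $ j * (-1 + \<i> * of_real s))) $ k) \<le> 1"
      proof (cases "k = j")
        case True
        have eq: "z0 $ j + \<tau> *\<^sub>R (z0 $ j * (-1 + \<i> * of_real s)) = z0 $ j * Complex (1 - \<tau>) (\<tau> * s)"
          by (simp add: scaleR_conv_of_real Complex_eq) (simp add: algebra_simps)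
        have p: "1 + s\<^sup>2 > 0" by (simp add: add_pos_nonneg)
        have "\<tau> < 1 / (1 + s\<^sup>2)" using t by simp
        hence "\<tau> * (1 + s\<^sup>2) < 1" using pos_less_divide_eq[OF p] by blast
        hence le: "\<tau> * (\<tau> * (1 + s\<^sup>2)) \<le> \<tau>" using t by (intro mult_left_le) auto
        have "(1 - \<tau>)\<^sup>2 + (\<tau> * s)\<^sup>2 = 1 - 2 * \<tau> + \<tau> * (\<tau> * (1 + s\<^sup>2))"
          by (simp add: power2_eq_square algebra_simps)
        hence "(1 - \<tau>)\<^sup>2 + (\<tau> * s)\<^sup>2 \<le> 1" using le t by simp
        hence "cmod (Complex (1 - \<tau>) (\<tau> * s)) \<le> 1" by (simp add: cmod_def)
        thus ?thesis using True assms by (simp only: coord_upd if_True eq, simp add: norm_mult)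
      qed (simp only: coord_upd, simp add: z0le)
    qed
  qed
  define W where "W = z0 $ j * \<psi> j"
  have R': "- Re W - s * Im W \<le> 0" for s
    using R[of s] by (simp add: W_def algebra_simps)
  show "Im W = 0"
  proof (rule ccontr)
    assume "Im W \<noteq> 0"
    hence "- Re W - (- (Re W + 1) / Im W) * Im W = 1" by (simp add: field_simps)
    thus False using R'[of "- (Re W + 1) / Im W"] by simp
  qed
  thus "Re W \<ge> 0" using R'[of 0] by simp
qed

lemma main_ineq:
  "(cmod (1 - cip w0 (f 0)))\<^sup>2 / (1 - (norm (f 0))\<^sup>2) \<le> inner (D z0) w0"
proof -
  define a where "a = f 0"
  define u where "u \<zeta> = f (\<zeta> *s z0)" for \<zeta>
  define X where "X = inner (D z0) w0"
  have holu: "(\<lambda>\<zeta>. u \<zeta> $ i) holomorphic_on ball 0 1" for i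
    unfolding u_def by (rule holo_u[OF holo]) (simp add: z0le)
  have inbu: "norm (u \<zeta>) < 1" if "norm \<zeta> < 1" for \<zeta>
  proof -
    have "\<zeta> *s z0 \<in> polydisc" using that by (intro polydisc_scale) (auto simp: z0le)
    thus ?thesis using fin by (auto simp: u_def)
  qed
  have u0: "u 0 = a" by (simp add: u_def a_def)
  have na: "norm a < 1" using inbu[of 0] u0 by simp
  have pa: "1 - (norm a)\<^sup>2 > 0" using na by (simp add: abs_square_less_1)
  define \<gamma> where "\<gamma> \<tau> = z0 + \<tau> *\<^sub>R (- z0)" for \<tau> :: real
  have \<gamma>eq: "\<gamma> \<tau> = complex_of_real (1 - \<tau>) *s z0" for \<tau>
    by (simp add: \<gamma>_def vec_eq_iff scaleR_conv_of_real[where 'a=complex] algebra_simps)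
  obtain \<delta> where \<delta>: "\<delta> > 0" "\<forall>\<tau>\<in>{0<..<\<delta>}. z0 + \<tau> *\<^sub>R (- z0) \<in> S"
  proof -
    have "\<exists>d>0. \<forall>\<tau>\<in>{0<..<d}. z0 + \<tau> *\<^sub>R (- z0) \<in> S"
    proof (rule ray_S[of 1])
      fix \<tau> :: real assume t: "\<tau> \<in> {0<..<1}"
      show "\<forall>k. cmod ((z0 + \<tau> *\<^sub>R - z0) $ k) \<le> 1"
      proof
        fix k
        have "(z0 + \<tau> *\<^sub>R - z0) $ k = complex_of_real (1 - \<tau>) * z0 $ k"
          by (simp add: scaleR_conv_of_real[where 'a=complex] algebra_simps)
        moreover have "cmod (complex_of_real (1 - \<tau>) * z0 $ k) \<le> 1"
        proof -
          have c1: "cmod (complex_of_real (1 - \<tau>)) \<le> 1" using t by (simp only: norm_of_real) auto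
          show ?thesis unfolding norm_mult using c1 z0le[of k] by (intro mult_le_one) auto
        qed
        ultimately show "cmod ((z0 + \<tau> *\<^sub>R - z0) $ k) \<le> 1" by simp
      qed
    qed simp
    thus ?thesis using that by blast
  qed
  define d where "d = min \<delta> 1"
  define T where "T = {0<..<d}"
  have inT: "\<gamma> \<tau> \<in> S" "\<gamma> \<tau> \<in> polydisc" "0 < \<tau>" "\<tau> < 1" if "\<tau> \<in> T" for \<tau>
  proof -
    show "\<gamma> \<tau> \<in> S" using \<delta>(2) that by (auto simp: T_def d_def \<gamma>_def)
    show "0 < \<tau>" "\<tau> < 1" using that by (auto simp: T_def d_def)
    hence "cmod (complex_of_real (1 - \<tau>)) < 1" by (simp only: norm_of_real)
    thus "\<gamma> \<tau> \<in> polydisc" unfolding \<gamma>eq by (intro polydisc_scale) (auto simp: z0le)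
  qed
  have gu: "g (\<gamma> \<tau>) = u (complex_of_real (1 - \<tau>))" if "\<tau> \<in> T" for \<tau>
  proof -
    have "\<gamma> \<tau> \<in> V" using inT(1)[OF that] by (simp add: S_def)
    hence "g (\<gamma> \<tau>) = f (\<gamma> \<tau>)" using g_eq inT(2)[OF that] by blast
    thus ?thesis by (simp add: u_def \<gamma>eq)
  qed
  have pick: "\<tau> * (2 - \<tau>) * (cmod (1 - cip (g (\<gamma> \<tau>)) a))\<^sup>2 \<le> (1 - (norm a)\<^sup>2) * (1 - inner (g (\<gamma> \<tau>)) (g (\<gamma> \<tau>)))"
    if "\<tau> \<in> T" for \<tau>
  proof -
    have "(1 - (1 - \<tau>)\<^sup>2) * (cmod (1 - cip (u (of_real (1 - \<tau>))) (u 0)))\<^sup>2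
           \<le> (1 - (norm (u 0))\<^sup>2) * (1 - (norm (u (of_real (1 - \<tau>))))\<^sup>2)"
      using inT(3,4)[OF that] by (intro ball_pick holu inbu) auto
    moreover have "1 - (1 - \<tau>)\<^sup>2 = \<tau> * (2 - \<tau>)" by (simp add: power2_eq_square algebra_simps)
    ultimately show ?thesis using gu[OF that] u0 by (simp add: power2_norm_eq_inner)
  qed
  have g1: "(\<gamma> has_derivative (\<lambda>\<tau>. \<tau> *\<^sub>R (- z0))) (at 0 within T)"
    unfolding \<gamma>_def by (auto intro!: derivative_eq_intros)
  have sub: "\<gamma> ` T \<subseteq> S" using inT by blast
  have g2: "(g has_derivative D) (at (\<gamma> 0) within \<gamma> ` T)"
    using has_derivative_subset[OF D_deriv sub] by (simp add: \<gamma>_def)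
  have dgc: "((g \<circ> \<gamma>) has_derivative (D \<circ> (\<lambda>\<tau>. \<tau> *\<^sub>R (- z0)))) (at 0 within T)"
    by (rule diff_chain_within[OF g1 g2])
  have gc0: "(g \<circ> \<gamma>) 0 = w0" by (simp add: \<gamma>_def gz0)
  have "((\<lambda>\<tau>. inner ((g \<circ> \<gamma>) \<tau>) ((g \<circ> \<gamma>) \<tau>)) has_derivative
          (\<lambda>h. inner ((g \<circ> \<gamma>) 0) ((D \<circ> (\<lambda>\<tau>. \<tau> *\<^sub>R (- z0))) h) + inner ((D \<circ> (\<lambda>\<tau>. \<tau> *\<^sub>R (- z0))) h) ((g \<circ> \<gamma>) 0)))
          (at 0 within T)"
    by (rule has_derivative_inner[OF dgc dgc])
  moreover have "(\<lambda>h. inner ((g \<circ> \<gamma>) 0) ((D \<circ> (\<lambda>\<tau>. \<tau> *\<^sub>R (- z0))) h) + inner ((D \<circ> (\<lambda>\<tau>. \<tau> *\<^sub>R (- z0))) h) ((g \<circ> \<gamma>) 0))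
      = (*) (- 2 * X)"
    unfolding gc0 X_def using D_lin
    by (auto simp: linear_scale linear_neg inner_commute algebra_simps)
  ultimately have "((\<lambda>\<tau>. inner (g (\<gamma> \<tau>)) (g (\<gamma> \<tau>))) has_field_derivative (- 2 * X)) (at 0 within T)"
    by (simp add: has_field_derivative_def o_def)
  hence "((\<lambda>y. (inner (g (\<gamma> y)) (g (\<gamma> y)) - inner (g (\<gamma> 0)) (g (\<gamma> 0))) / (y - 0)) \<longlongrightarrow> - 2 * X) (at 0 within T)"
    by (simp only: has_field_derivative_iff)
  moreover have "inner (g (\<gamma> 0)) (g (\<gamma> 0)) = 1"
    using gc0 nw0 by (simp add: power2_norm_eq_inner[symmetric])
  ultimately have "((\<lambda>y. (inner (g (\<gamma> y)) (g (\<gamma> y)) - 1) / y) \<longlongrightarrow> - 2 * X) (at 0 within T)" by simp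
  hence "((\<lambda>y. - ((inner (g (\<gamma> y)) (g (\<gamma> y)) - 1) / y)) \<longlongrightarrow> - (- 2 * X)) (at 0 within T)"
    by (rule tendsto_minus)
  hence "((\<lambda>y. (1 - (norm a)\<^sup>2) * (- ((inner (g (\<gamma> y)) (g (\<gamma> y)) - 1) / y))) \<longlongrightarrow> (1 - (norm a)\<^sup>2) * (- (- 2 * X))) (at 0 within T)"
    by (rule tendsto_mult_left)
  hence limR: "((\<lambda>y. (1 - (norm a)\<^sup>2) * ((1 - inner (g (\<gamma> y)) (g (\<gamma> y))) / y)) \<longlongrightarrow> (1 - (norm a)\<^sup>2) * (2 * X)) (at 0 within T)"
    by (simp add: minus_divide_left)
  have "continuous (at 0 within T) (g \<circ> \<gamma>)" using has_derivative_continuous[OF dgc] .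
  hence gl: "((\<lambda>y. g (\<gamma> y)) \<longlongrightarrow> w0) (at 0 within T)"
    using gc0 by (simp add: continuous_within o_def)
  have "((\<lambda>y. cip (g (\<gamma> y)) a) \<longlongrightarrow> cip w0 a) (at 0 within T)"
    unfolding cip_def by (intro tendsto_intros gl)
  hence "((\<lambda>y. (2 - y) * (cmod (1 - cip (g (\<gamma> y)) a))\<^sup>2) \<longlongrightarrow> (2 - 0) * (cmod (1 - cip w0 a))\<^sup>2) (at 0 within T)"
    by (intro tendsto_intros tendsto_ident_at)
  hence limL: "((\<lambda>y. (2 - y) * (cmod (1 - cip (g (\<gamma> y)) a))\<^sup>2) \<longlongrightarrow> 2 * (cmod (1 - cip w0 a))\<^sup>2) (at 0 within T)"
    by simp
  have ev: "eventually (\<lambda>y. (2 - y) * (cmod (1 - cip (g (\<gamma> y)) a))\<^sup>2 \<le> (1 - (norm a)\<^sup>2) * ((1 - inner (g (\<gamma> y)) (g (\<gamma> y))) / y)) (at 0 within T)"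
  proof -
    have "(2 - y) * (cmod (1 - cip (g (\<gamma> y)) a))\<^sup>2 \<le> (1 - (norm a)\<^sup>2) * ((1 - inner (g (\<gamma> y)) (g (\<gamma> y))) / y)"
      if y: "y \<in> T" for y
    proof -
      have yp: "y > 0" using inT(3)[OF y] .
      have "y * ((2 - y) * (cmod (1 - cip (g (\<gamma> y)) a))\<^sup>2) \<le> (1 - (norm a)\<^sup>2) * (1 - inner (g (\<gamma> y)) (g (\<gamma> y)))"
        using pick[OF y] by (simp add: mult.assoc)
      thus ?thesis using yp by (simp add: field_simps)
    qed
    thus ?thesis unfolding eventually_at_filter by (auto intro: always_eventually)
  qed
  have nt: "\<not> trivial_limit (at (0::real) within T)"
  proof -
    have "d > 0" using \<delta> by (simp add: d_def)
    thus ?thesis unfolding trivial_limit_within T_def using islimpt_greaterThanLessThan1 by blast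
  qed
  have "2 * (cmod (1 - cip w0 a))\<^sup>2 \<le> (1 - (norm a)\<^sup>2) * (2 * X)"
    by (rule tendsto_le[OF nt limR limL ev])
  hence "(cmod (1 - cip w0 a))\<^sup>2 \<le> (1 - (norm a)\<^sup>2) * X" by simp
  thus ?thesis using pa by (simp add: a_def X_def divide_simps mult.commute)
qed

end

theorem theorem1p2:
  fixes f :: "complex ^ 'n::finite \<Rightarrow> complex ^ 'm::finite"
    and \<alpha> :: real and z0 :: "complex ^ 'n" and w0 :: "complex ^ 'm"
    and V :: "(complex ^ 'n) set" and g :: "complex ^ 'n \<Rightarrow> complex ^ 'm"
    and g' :: "complex ^ 'n \<Rightarrow> complex ^ 'n \<Rightarrow> complex ^ 'm"
  assumes "0 < \<alpha>" and "\<alpha> < 1"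
    and "holo_vec_on f polydisc"
    and "f ` polydisc \<subseteq> ball 0 1"
    and "z0 \<in> frontier polydisc"
    and "z0 \<in> V"
    and "C1alpha_extension f \<alpha> V g g'"
    and "g z0 = w0" and "w0 \<in> sphere 0 1"
  shows "let a = f 0;
             lam = (cmod (1 - (\<Sum>j\<in>UNIV. cnj (a $ j) * w0 $ j)))\<^sup>2 / (1 - (norm a)\<^sup>2)
         in lam > 0 \<and>
            (\<exists>\<gamma> :: 'n \<Rightarrow> real.
               (\<forall>j. \<gamma> j \<ge> 0) \<and>
               (\<forall>j. cmod (z0 $ j) < 1 \<longrightarrow> \<gamma> j = 0) \<and>
               (\<Sum>j\<in>{j. cmod (z0 $ j) = 1}. \<gamma> j) \<ge> 1 \<and>
               (\<forall>j. (\<Sum>i\<in>UNIV. cnj (cjac g' z0 i j) * w0 $ i)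
                      = complex_of_real (lam * \<gamma> j) * z0 $ j))"
proof -
  interpret setting f \<alpha> z0 w0 V g g'
    using assms by unfold_locales auto
  define a where "a = f 0"
  define lam where "lam = (cmod (1 - (\<Sum>j\<in>UNIV. cnj (a $ j) * w0 $ j)))\<^sup>2 / (1 - (norm a)\<^sup>2)"
  have sumeq: "(\<Sum>j\<in>UNIV. cnj (a $ j) * w0 $ j) = cip w0 a" by (simp add: cip_def mult.commute)
  have "0 \<in> polydisc" by (simp add: polydisc_def)
  hence na: "norm a < 1" using assms(4) by (auto simp: a_def)
  have pa: "1 - (norm a)\<^sup>2 > 0" using na by (simp add: abs_square_less_1)
  have "cmod (cip w0 a) \<le> norm w0 * norm a" by (rule cip_cauchy)
  hence "cmod (cip w0 a) < 1" using na nw0 by simp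
  hence "1 - cip w0 a \<noteq> 0" by auto
  hence lampos: "lam > 0" unfolding lam_def sumeq using pa by simp
  have lamle: "lam \<le> inner (D z0) w0" unfolding lam_def sumeq using main_ineq by (simp add: a_def)
  define \<Gamma> where "\<Gamma> j = (if cmod (z0 $ j) = 1 then Re (z0 $ j * \<psi> j) / lam else 0)" for j
  have cip_sum: "cip (\<Sum>j\<in>UNIV. h j) y = (\<Sum>j\<in>UNIV. cip (h j) y)" for h :: "'n \<Rightarrow> complex ^ 'm" and y
    unfolding cip_def by (simp add: sum_component sum_distrib_right) (rule sum.swap)
  have psi0: "\<psi> j = 0" if "cmod (z0 $ j) \<noteq> 1" for j
    using psi_zero z0le[of j] that by simp
  have "(\<Sum>j\<in>{j. cmod (z0 $ j) = 1}. Re (z0 $ j * \<psi> j)) = (\<Sum>j\<in>UNIV. Re (z0 $ j * \<psi> j))"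
    by (rule sum.mono_neutral_left) (auto simp: psi0)
  also have "\<dots> = Re (cip (D z0) w0)"
    by (simp add: D_vec[of z0] cip_sum cip_scale_left \<psi>_def)
  also have "\<dots> = inner (D z0) w0" by (simp add: inner_cip)
  finally have sumpsi: "(\<Sum>j\<in>{j. cmod (z0 $ j) = 1}. Re (z0 $ j * \<psi> j)) = inner (D z0) w0" .
  have "(\<Sum>j\<in>{j. cmod (z0 $ j) = 1}. \<Gamma> j) = (\<Sum>j\<in>{j. cmod (z0 $ j) = 1}. Re (z0 $ j * \<psi> j)) / lam"
    by (simp add: \<Gamma>_def sum_divide_distrib)
  also have "\<dots> \<ge> 1" using sumpsi lamle lampos by simp
  finally have sum1: "(\<Sum>j\<in>{j. cmod (z0 $ j) = 1}. \<Gamma> j) \<ge> 1" .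
  have key: "(\<Sum>i\<in>UNIV. cnj (cjac g' z0 i j) * w0 $ i) = complex_of_real (lam * \<Gamma> j) * z0 $ j" for j
  proof -
    have lhs: "(\<Sum>i\<in>UNIV. cnj (cjac g' z0 i j) * w0 $ i) = cnj (\<psi> j)"
      by (simp add: cjac_eq \<psi>_def cip_def)
    show ?thesis
    proof (cases "cmod (z0 $ j) = 1")
      case True
      define W where "W = z0 $ j * \<psi> j"
      have W: "W = complex_of_real (Re W)" using psi_bdry(1)[OF True] by (simp add: W_def complex_eq_iff)
      have zz: "cnj (z0 $ j) * z0 $ j = 1"
        using True by (metis complex_norm_square mult.commute of_real_1 one_power2)
      have "\<psi> j = cnj (z0 $ j) * W" using zz by (simp add: W_def mult.assoc[symmetric])
      hence "cnj (\<psi> j) = z0 $ j * cnj W" by simp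
      also have "cnj W = complex_of_real (Re W)" using W by (metis complex_cnj_complex_of_real)
      finally have "cnj (\<psi> j) = complex_of_real (Re W) * z0 $ j" by simp
      moreover have "lam * \<Gamma> j = Re W" using True lampos by (simp add: \<Gamma>_def W_def)
      ultimately show ?thesis using lhs by simp
    next
      case False
      thus ?thesis using lhs psi0[OF False] by (simp add: \<Gamma>_def)
    qed
  qed
  have G0: "\<forall>j. \<Gamma> j \<ge> 0" using psi_bdry(2) lampos by (simp add: \<Gamma>_def)
  have G1: "\<forall>j. cmod (z0 $ j) < 1 \<longrightarrow> \<Gamma> j = 0" by (simp add: \<Gamma>_def)
  show ?thesis
    unfolding Let_def a_def[symmetric] lam_def[symmetric]
    using lampos G0 G1 sum1 key by blast
qed

end
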